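(* Let $(\mathbf f,\mathbf g)$ be a vector admissible system with potential $U$. Let $(\mathbf x,\epsilon)\in\mathcal X\times\mathcal E$ with $\mathbf x\preceq\mathbf f(\mathbf g(\mathbf x);\epsilon)$ or $\mathbf x\succeq\mathbf f(\mathbf g(\mathbf x);\epsilon)$. Then the limit $\mathbf x^\infty(\mathbf x;\epsilon)$ exists and $U(\mathbf x;\epsilon)\ge U(\mathbf x^\infty(\mathbf x;\epsilon);\epsilon)$.
   Context: Let $d\in\mathbb N$, $\mathcal X=[0,1]^d$, $\mathcal E=[0,1]$, $\mathcal X^\circ=\mathcal X\setminus\{\mathbf 0\}$. Vectors are row vectors; $\mathbf x\preceq\mathbf y$ means $x_i\le y_i$ for all $i$. For a vector-valued function $\mathbf h$ of $\mathbf x$, $\mathbf h'(\mathbf x)$ denotes its Jacobian matrix $[\partial h_i/\partial x_j]_{i,j}$; for a scalar function $F(\mathbf x;\epsilon)$, $F'(\mathbf x;\epsilon)$ denotes its gradient in $\mathbf x$ (a row vector). Let $\mathbf D$ be a $d\times d$ diagonal matrix with positive diagonal entries, $\mathbf f:\mathcal X\times\mathcal E\to\mathcal X$, $\mathbf g:\mathcal X\to\mathcal X$, and $F:\mathcal X\times\mathcal E\to\mathbb R$, $G:\mathcal X\to\mathbb R$ functionals with $F'(\mathbf x;\epsilon)=\mathbf f(\mathbf x;\epsilon)\mathbf D$ and $G'(\mathbf x)=\mathbf g(\mathbf x)\mathbf D$, normalized so that $F(\mathbf 0;\epsilon)=G(\mathbf 0)=0$. The pair $(\mathbf f,\mathbf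 g)$ is a vector admissible system if: (i) $\mathbf f,\mathbf g$ are twice continuously differentiable; (ii) $\mathbf f(\mathbf x;\epsilon)$ and $\mathbf g(\mathbf x)$ are non-decreasing in $\mathbf x$ with respect to $\preceq$; (iii) for each $\mathbf x\in\mathcal X^\circ$, $\mathbf f(\mathbf x;\epsilon)$ is strictly increasing in $\epsilon$, i.e. $\epsilon_1<\epsilon_2$ implies $\mathbf f(\mathbf x;\epsilon_1)\preceq\mathbf f(\mathbf x;\epsilon_2)$ and $\mathbf f(\mathbf x;\epsilon_1)\neq\mathbf f(\mathbf x;\epsilon_2)$; (iv) $\mathbf f(\mathbf 0;\epsilon)=\mathbf f(\mathbf x;0)=\mathbf g(\mathbf 0)=\mathbf 0$ and $F(\mathbf x;0)=0$. The associated recursion is $\mathbf x^{(\ell+1)}=\mathbf f(\mathbf g(\mathbf x^{(\ell)});\epsilon)$. The potential function is $U(\mathbf x;\epsilon)=\mathbf g(\mathbf x)\mathbf D\mathbf x^{\mathsf T}-G(\mathbf x)-F(\mathbf g(\mathbf x);\epsilon)$. For $(\mathbf x,\epsilon)\in\mathcal X\times\mathcal E$, let $\mathbf x^{(0)}=\mathbf x$ and run the recursion; $\mathbf x^\infty(\mathbf x;\epsilon)=\lim_{\ell\to\infty}\mathbf x^{(\ell)}$ whenever this limit exists. *)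

theory Defs
  imports "HOL-Analysis.Analysis"
begin

definition cube :: "(real ^ 'n) set" where
  "cube = {x. \<forall>i. 0 \<le> x $ i \<and> x $ i \<le> 1}"

definition C2_on :: "'a::real_normed_vector set \<Rightarrow> ('a \<Rightarrow> 'b::real_normed_vector) \<Rightarrow> bool" where
  "C2_on S h \<longleftrightarrow> (\<exists>h' :: 'a \<Rightarrow> ('a \<Rightarrow>\<^sub>L 'b). \<exists>h'' :: 'a \<Rightarrow> ('a \<Rightarrow>\<^sub>L ('a \<Rightarrow>\<^sub>L 'b)).
      (\<forall>x\<in>S. (h has_derivative blinfun_apply (h' x)) (at x within S)) \<and>
      (\<forall>x\<in>S. (h' has_derivative blinfun_apply (h'' x)) (at x within S)) \<and>
      continuous_on S h'')"

text \<open>Row vector times diagonal matrix D = diag(dd) times column vector: u D v^T.\<close>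
definition dform :: "real ^ 'n \<Rightarrow> real ^ 'n \<Rightarrow> real ^ 'n \<Rightarrow> real" where
  "dform dd u v = (\<Sum>i\<in>UNIV. u $ i * dd $ i * v $ i)"

definition vector_admissible ::
  "(real ^ 'n \<Rightarrow> real \<Rightarrow> real ^ 'n) \<Rightarrow> (real ^ 'n \<Rightarrow> real ^ 'n) \<Rightarrow>
   (real ^ 'n \<Rightarrow> real \<Rightarrow> real) \<Rightarrow> (real ^ 'n \<Rightarrow> real) \<Rightarrow> real ^ 'n \<Rightarrow> bool" where
  "vector_admissible f g F G dd \<longleftrightarrow>
     \<comment> \<open>D diagonal with positive entries\<close>
     (\<forall>i. 0 < dd $ i) \<and>
     \<comment> \<open>f : X x E \<rightarrow> X, g : X \<rightarrow> X\<close>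
     (\<forall>x\<in>cube. \<forall>e\<in>{0..1}. f x e \<in> cube) \<and> (\<forall>x\<in>cube. g x \<in> cube) \<and>
     \<comment> \<open>F'(x;e) = f(x;e) D, G'(x) = g(x) D\<close>
     (\<forall>x\<in>cube. \<forall>e\<in>{0..1}. ((\<lambda>y. F y e) has_derivative (\<lambda>h. dform dd (f x e) h)) (at x within cube)) \<and>
     (\<forall>x\<in>cube. (G has_derivative (\<lambda>h. dform dd (g x) h)) (at x within cube)) \<and>
     \<comment> \<open>normalization\<close>
     (\<forall>e\<in>{0..1}. F 0 e = 0) \<and> G 0 = 0 \<and>
     \<comment> \<open>(i) twice continuously differentiable\<close>
     C2_on (cube \<times> {0..1}) (\<lambda>p. f (fst p) (snd p)) \<and> C2_on cube g \<and>
     \<comment> \<open>(ii) monotone in x\<close>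
     (\<forall>e\<in>{0..1}. \<forall>x\<in>cube. \<forall>y\<in>cube. x \<le> y \<longrightarrow> f x e \<le> f y e) \<and>
     (\<forall>x\<in>cube. \<forall>y\<in>cube. x \<le> y \<longrightarrow> g x \<le> g y) \<and>
     \<comment> \<open>(iii) strictly increasing in e on X minus 0\<close>
     (\<forall>x\<in>cube - {0}. \<forall>e1\<in>{0..1}. \<forall>e2\<in>{0..1}. e1 < e2 \<longrightarrow>
        f x e1 \<le> f x e2 \<and> f x e1 \<noteq> f x e2) \<and>
     \<comment> \<open>(iv) boundary conditions\<close>
     (\<forall>e\<in>{0..1}. f 0 e = 0) \<and> (\<forall>x\<in>cube. f x 0 = 0) \<and> g 0 = 0 \<and>
     (\<forall>x\<in>cube. F x 0 = 0)"

definition potential ::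
  "(real ^ 'n \<Rightarrow> real ^ 'n) \<Rightarrow> (real ^ 'n \<Rightarrow> real \<Rightarrow> real) \<Rightarrow> (real ^ 'n \<Rightarrow> real) \<Rightarrow>
   real ^ 'n \<Rightarrow> real ^ 'n \<Rightarrow> real \<Rightarrow> real" where
  "potential g F G dd x e = dform dd (g x) x - G x - F (g x) e"

definition iterate_rec ::
  "(real ^ 'n \<Rightarrow> real \<Rightarrow> real ^ 'n) \<Rightarrow> (real ^ 'n \<Rightarrow> real ^ 'n) \<Rightarrow> real \<Rightarrow> real ^ 'n \<Rightarrow> nat \<Rightarrow> real ^ 'n" where
  "iterate_rec f g e x l = ((\<lambda>y. f (g y) e) ^^ l) x"

end

theory Submission
  imports Defs
begin

lemma dform_diff_nonneg:
  assumes "\<forall>i. 0 < dd $ i" and "\<forall>i. (u $ i - w $ i) * (v $ i) \<ge> 0"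
  shows "dform dd w v \<le> dform dd u v"
proof -
  have "\<forall>i. w $ i * dd $ i * v $ i \<le> u $ i * dd $ i * v $ i"
  proof
    fix i
    have "0 \<le> ((u $ i - w $ i) * v $ i) * dd $ i"
      using assms by (simp add: less_imp_le)
    then show "w $ i * dd $ i * v $ i \<le> u $ i * dd $ i * v $ i"
      by (simp add: algebra_simps)
  qed
  then show ?thesis unfolding dform_def by (intro sum_mono) auto
qed

lemma seg_in_cube:
  assumes "a \<in> cube" "b \<in> cube" "0 \<le> t" "t \<le> 1"
  shows "a + t *\<^sub>R (b - a) \<in> cube"
proof -
  have "0 \<le> (a + t *\<^sub>R (b - a)) $ i \<and> (a + t *\<^sub>R (b - a)) $ i \<le> 1" for i
  proof -
    have eq: "(a + t *\<^sub>R (b - a)) $ i = (1 - t) * a $ i + t * b $ i"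
      by (simp add: algebra_simps)
    have a: "0 \<le> a $ i" "a $ i \<le> 1" "0 \<le> b $ i" "b $ i \<le> 1"
      using assms(1,2) unfolding cube_def by auto
    show ?thesis unfolding eq using assms(3,4) a
      by (intro conjI add_nonneg_nonneg mult_nonneg_nonneg convex_bound_le) auto
  qed
  then show ?thesis unfolding cube_def by auto
qed

lemma key_ineq:
  fixes G :: "real ^ 'n \<Rightarrow> real" and gg :: "real ^ 'n \<Rightarrow> real ^ 'n"
  assumes dd: "\<forall>i. 0 < dd $ i"
    and der: "\<forall>x\<in>cube. (G has_derivative (\<lambda>h. dform dd (gg x) h)) (at x within cube)"
    and mono: "\<forall>x\<in>cube. \<forall>y\<in>cube. x \<le> y \<longrightarrow> gg x \<le> gg y"
    and ab: "a \<in> cube" "b \<in> cube" "a \<le> b \<or> b \<le> a"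
  shows "dform dd (gg a) (b - a) \<le> G b - G a"
proof -
  define p where "p t = a + t *\<^sub>R (b - a)" for t :: real
  define \<psi> where "\<psi> t = G (p t) - t * dform dd (gg a) (b - a)" for t
  have pin: "p ` {0..1} \<subseteq> cube" unfolding p_def using seg_in_cube ab by auto
  have dp: "(p has_derivative (\<lambda>h. h *\<^sub>R (b - a))) (at t within {0..1})" for t
    unfolding p_def by (auto intro!: derivative_eq_intros)
  have "\<exists>\<xi>\<in>{0..1}. \<psi> 1 - \<psi> 0 =
     (\<lambda>h. dform dd (gg (p \<xi>)) (h *\<^sub>R (b - a)) - h * dform dd (gg a) (b - a)) (1 - 0)"
  proof (rule mvt_very_simple)
    fix t :: real assume t: "0 \<le> t" "t \<le> 1"
    have "((\<lambda>t. G (p t)) has_derivative (\<lambda>h. dform dd (gg (p t)) (h *\<^sub>R (b - a)))) (at t within {0..1})"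
      using has_derivative_in_compose2[of cube G "\<lambda>x. dform dd (gg x)", OF der[rule_format] pin _ dp] t by auto
    then show "(\<psi> has_derivative (\<lambda>h. dform dd (gg (p t)) (h *\<^sub>R (b - a)) - h * dform dd (gg a) (b - a))) (at t within {0..1})"
      unfolding \<psi>_def by (auto intro!: derivative_eq_intros)
  qed simp
  then obtain \<xi> where xi: "0 \<le> \<xi>" "\<xi> \<le> 1" and eq: "\<psi> 1 - \<psi> 0 = dform dd (gg (p \<xi>)) (b - a) - dform dd (gg a) (b - a)"
    by auto
  have pxi: "p \<xi> \<in> cube" using pin xi by auto
  have "dform dd (gg a) (b - a) \<le> dform dd (gg (p \<xi>)) (b - a)"
  proof (rule dform_diff_nonneg[OF dd], rule allI)
    fix i
    from ab(3) show "0 \<le> (gg (p \<xi>) $ i - gg a $ i) * (b - a) $ i"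
    proof
      assume le: "a \<le> b"
      have "a \<le> p \<xi>" using le xi unfolding p_def less_eq_vec_def by auto
      then have "gg a \<le> gg (p \<xi>)" using mono ab pxi by auto
      then show ?thesis using le unfolding less_eq_vec_def by auto
    next
      assume le: "b \<le> a"
      have "p \<xi> \<le> a" using le xi unfolding p_def less_eq_vec_def
        by (auto simp: mult_nonneg_nonpos)
      then have "gg (p \<xi>) \<le> gg a" using mono ab pxi by auto
      then show ?thesis using le unfolding less_eq_vec_def
        by (auto intro!: mult_nonpos_nonpos)
    qed
  qed
  then have "0 \<le> \<psi> 1 - \<psi> 0" using eq by simp
  then show ?thesis unfolding \<psi>_def p_def by simp
qed


lemma dform_cont:
  fixes u v :: "real ^ 'n \<Rightarrow> real ^ 'n"
  assumes "continuous_on S u" "continuous_on S v"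
  shows "continuous_on S (\<lambda>y. dform dd (u y) (v y))"
  unfolding dform_def
  by (intro continuous_intros continuous_on_component assms)

lemma dform_identity:
  "dform dd gb b - dform dd ga a - dform dd ga (b - a) - dform dd b (gb - ga) = 0"
  unfolding dform_def by (simp add: sum_subtractf[symmetric] algebra_simps)

theorem lemma4:
  fixes f :: "real ^ 'n \<Rightarrow> real \<Rightarrow> real ^ 'n" and g :: "real ^ 'n \<Rightarrow> real ^ 'n"
    and F :: "real ^ 'n \<Rightarrow> real \<Rightarrow> real" and G :: "real ^ 'n \<Rightarrow> real"
    and dd :: "real ^ 'n" and x :: "real ^ 'n" and e :: real
  assumes "vector_admissible f g F G dd"
    and "x \<in> cube" and "e \<in> {0..1}"
    and "x \<le> f (g x) e \<or> f (g x) e \<le> x"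
  shows "\<exists>L. iterate_rec f g e x \<longlonglongrightarrow> L \<and>
             potential g F G dd x e \<ge> potential g F G dd L e"
proof -
  note A = assms(1)[unfolded vector_admissible_def]
  have dd: "\<forall>i. 0 < dd $ i" using A by blast
  have fcube: "\<And>y. y \<in> cube \<Longrightarrow> f y e \<in> cube" using A assms(3) by blast
  have gcube: "\<And>y. y \<in> cube \<Longrightarrow> g y \<in> cube" using A by blast
  have derF: "\<forall>y\<in>cube. ((\<lambda>y. F y e) has_derivative (\<lambda>h. dform dd (f y e) h)) (at y within cube)"
    using A assms(3) by blast
  have derG: "\<forall>y\<in>cube. (G has_derivative (\<lambda>h. dform dd (g y) h)) (at y within cube)"
    using A by blast
  have fmono: "\<forall>y\<in>cube. \<forall>z\<in>cube. y \<le> z \<longrightarrow> f y e \<le> f z e" using A assms(3) by blast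
  have gmono: "\<forall>y\<in>cube. \<forall>z\<in>cube. y \<le> z \<longrightarrow> g y \<le> g z" using A by blast
  define T where "T y = f (g y) e" for y
  define s where "s = iterate_rec f g e x"
  have sSuc: "s (Suc l) = T (s l)" for l
    unfolding s_def iterate_rec_def T_def by simp
  have s0: "s 0 = x" unfolding s_def iterate_rec_def by simp
  have Tcube: "y \<in> cube \<Longrightarrow> T y \<in> cube" for y unfolding T_def using fcube gcube by blast
  have Tmono: "y \<in> cube \<Longrightarrow> z \<in> cube \<Longrightarrow> y \<le> z \<Longrightarrow> T y \<le> T z" for y z
    unfolding T_def using fmono gmono gcube by blast
  have scube: "s l \<in> cube" for l
    by (induction l) (auto simp: s0 sSuc assms(2) Tcube)
  have dir: "(\<forall>l. s l \<le> s (Suc l)) \<or> (\<forall>l. s (Suc l) \<le> s l)"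
    using assms(4)
  proof
    assume h: "x \<le> f (g x) e"
    have "s l \<le> s (Suc l)" for l
    proof (induction l)
      case 0 then show ?case using h by (simp add: sSuc s0 T_def)
    next
      case (Suc l) then show ?case by (metis Tmono scube sSuc)
    qed
    then show ?thesis by blast
  next
    assume h: "f (g x) e \<le> x"
    have "s (Suc l) \<le> s l" for l
    proof (induction l)
      case 0 then show ?case using h by (simp add: sSuc s0 T_def)
    next
      case (Suc l) then show ?case by (metis Tmono scube sSuc)
    qed
    then show ?thesis by blast
  qed
  have comp: "s l \<le> s (Suc l) \<or> s (Suc l) \<le> s l" for l using dir by blast
  have conv: "convergent (\<lambda>l. s l $ i)" for i
  proof (rule Bseq_monoseq_convergent)
    show "Bseq (\<lambda>l. s l $ i)"
    proof (rule BseqI'[of _ 1])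
      fix l show "norm (s l $ i) \<le> 1" using scube[of l] unfolding cube_def by auto
    qed
    show "monoseq (\<lambda>l. s l $ i)"
      unfolding monoseq_iff using dir
      by (auto intro!: incseq_SucI decseq_SucI simp: less_eq_vec_def)
  qed
  define L where "L = (\<chi> i. lim (\<lambda>l. s l $ i))"
  have compl: "(\<lambda>l. s l $ i) \<longlonglongrightarrow> L $ i" for i
    unfolding L_def using conv[of i] by (simp add: convergent_LIMSEQ_iff)
  have lim: "s \<longlonglongrightarrow> L" by (rule vec_tendstoI) (use compl in simp)
  have Lcube: "L \<in> cube"
    unfolding cube_def
  proof (safe)
    fix i
    show "0 \<le> L $ i"
      by (rule LIMSEQ_le_const[OF compl]) (use scube in \<open>auto simp: cube_def\<close>)
    show "L $ i \<le> 1"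
      by (rule LIMSEQ_le_const2[OF compl]) (use scube in \<open>auto simp: cube_def\<close>)
  qed
  define U where "U y = potential g F G dd y e" for y
  have step: "U (s (Suc l)) \<le> U (s l)" for l
  proof -
    let ?a = "s l" and ?b = "s (Suc l)"
    have b: "?b = f (g ?a) e" by (simp add: sSuc T_def)
    have k1: "dform dd (g ?a) (?b - ?a) \<le> G ?b - G ?a"
      by (rule key_ineq[OF dd derG gmono scube scube comp])
    have gc: "g ?a \<le> g ?b \<or> g ?b \<le> g ?a" using comp[of l] gmono scube by blast
    have k2: "dform dd (f (g ?a) e) (g ?b - g ?a) \<le> F (g ?b) e - F (g ?a) e"
      by (rule key_ineq[where G="\<lambda>y. F y e" and gg="\<lambda>y. f y e", OF dd derF fmono gcube gcube gc])
        (use scube in auto)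
    have "dform dd (g ?b) ?b - dform dd (g ?a) ?a - dform dd (g ?a) (?b - ?a) - dform dd ?b (g ?b - g ?a) = 0"
      by (rule dform_identity)
    then show ?thesis using k1 k2 unfolding U_def potential_def b[symmetric] by linarith
  qed
  have bound: "U (s l) \<le> U x" for l
  proof (induction l)
    case 0 then show ?case by (simp add: s0)
  next
    case (Suc l) then show ?case using step[of l] by linarith
  qed
  have contG: "continuous_on cube G"
    using derG has_derivative_continuous continuous_on_eq_continuous_within by blast
  have contF: "continuous_on cube (\<lambda>y. F y e)"
    using derF has_derivative_continuous continuous_on_eq_continuous_within by blast
  have contg: "continuous_on cube g"
  proof -
    obtain g' g'' where "\<forall>y\<in>cube. (g has_derivative blinfun_apply (g' y)) (at y within cube)"
      using conjunct1[OF conjunct2[OF conjunct2[OF conjunct2[OF conjunct2[OF conjunct2[OF conjunct2[OF conjunct2[OF conjunct2[OF A]]]]]]]]] unfolding C2_on_def by blast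
    then show ?thesis
      using has_derivative_continuous continuous_on_eq_continuous_within by blast
  qed
  have contFg: "continuous_on cube (\<lambda>y. F (g y) e)"
    by (rule continuous_on_compose2[OF contF contg]) (use gcube in auto)
  have contU: "continuous_on cube U"
    unfolding U_def potential_def
    by (intro continuous_intros dform_cont contG contFg contg continuous_on_id)
  have "(\<lambda>l. U (s l)) \<longlonglongrightarrow> U L"
    by (rule continuous_on_tendsto_compose[OF contU lim Lcube]) (use scube in simp)
  then have "U L \<le> U x"
    by (rule LIMSEQ_le_const2) (use bound in auto)
  then show ?thesis using lim unfolding U_def s_def by blast
qed

end
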